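(* Let $d\ge 1$, let $x\sim\mathcal N(0,\Sigma)$ on $\mathbb R^d$ with $\Sigma=\mathrm{diag}(\sigma_1^2,\ldots,\sigma_d^2)$ and $\sigma_1^2>\sigma_2^2>\cdots>\sigma_d^2>0$, let $\varepsilon\in(0,1)$, $R>0$ and $T_{\mathrm{wu}}\ge 0$. For $j=1,\dots,d$ and $T\ge0$ let $$g_j(T)=\Bigl(1+\tfrac{1-\varepsilon^2}{\varepsilon^2}\,e^{-4\sigma_j^2 T}\Bigr)^{-1}$$ (the activation $u_jv_j$ of mode $j$ at time $T$ of the plain-autoencoder flow below started from $u_j(0)=v_j(0)=\varepsilon$). Define $$m^{\mathrm{wu}}(T_{\mathrm{wu}},R):=\max\Bigl\{m\in\{1,\dots,d\}:\ R>\tfrac12\sum_{i=1}^{m-1}\log_2\frac{\sigma_i^2\,g_i(T_{\mathrm{wu}})}{\sigma_m^2\,g_m(T_{\mathrm{wu}})}\Bigr\}.$$ Consider the following two-phase training (warm-up then RD-AE) of the diagonal linear model $W_1=\mathrm{diag}(u_1,\dots,u_d)$, $W_2=\mathrm{diag}(v_1,\dots,v_d)$: on $[0,T_{\mathrm{wu}}]$ run the plain-autoencoder flow from $u_j(0)=v_j(0)=\varepsilon$, and for $t\ge T_{\mathrm{wu}}$ run the RD-AE flow at rate $R$ with commitment weight $\beta=1$ (both flows defined in the context). Then at convergence at most $m^{\mathrm{wu}}$ modes remain active, and the limiting reconstruction loss satisfies $$L_{\mathrm{rec}}^{\infty}\;\ge\; m^{\mathrm{wu}}\,\delta_{m^{\mathrm{wu}}}(R)+\sum_{j>m^{\mathrm{wu}}}\sigma_j^2,\qquad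 \delta_m(R):=\Bigl(\prod_{i=1}^m\sigma_i^2\Bigr)^{1/m}2^{-2R/m}.$$
   Context: Plain-autoencoder flow (per mode $j$): $\dot u_j=2\sigma_j^2 v_j(1-u_jv_j)$, $\dot v_j=2\sigma_j^2 u_j(1-u_jv_j)$. RD-AE channel at rate $R$ (bits): given the current parameters, the latent coordinates $z_j=u_jx_j$ have variances $\lambda_j=u_j^2\sigma_j^2$. The water level $D^\star=D^\star(\lambda_1,\dots,\lambda_d;R)$ is the unique solution of $\sum_{j}\tfrac12\log_2^+(\lambda_j/D^\star)=R$ (where $\log_2^+ y=\max(\log_2 y,0)$). Set $D_j=\min(\lambda_j,D^\star)$, $c_j=1-D_j/\lambda_j$, $\tau_j^2=c_jD^\star$. Mode $j$ is called active if $\lambda_j>D^\star$ and inactive otherwise (then $c_j=\tau_j^2=0$). This corresponds to the rate-distortion-optimal Gaussian channel $z_{q,j}\mid z_j\sim\mathcal N(c_jz_j,\tau_j^2)$ minimizing $\mathbb E\|z-z_q\|^2$ subject to $I(z;z_q)\le R$. RD-AE flow with commitment weight $\beta$ (channel parameters $c_j,D_j$ recomputed from the current $\lambda_j$ at every time): $\dot u_j=2\sigma_j^2 v_j(1-c_ju_jv_j)-\dfrac{2\beta D_j}{u_j}$, $\dot v_j=2\sigma_j^2c_ju_j(1-u_jv_j)$. Reconstruction loss: $L_{\mathrm{rec}}(u,v)=\sum_{j=1}^d\bigl[\sigma_j^2(1-c_ju_jv_j)^2+v_j^2\tau_j^2\bigr]$ (the expected value of $\|x-W_2z_q\|^2$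 through this channel), and $L_{\mathrm{rec}}^\infty$ denotes its limit as $t\to\infty$ along the two-phase trajectory. *)

theory Defs
  imports "HOL-Analysis.Analysis"
begin

text \<open>Conventions: modes are indexed by j in {1..d}; s j denotes the variance sigma_j^2.
  Parameters are u, v :: nat => real (only indices 1..d matter); a trajectory is
  a function of time real => nat => real.\<close>

definition log2p :: "real \<Rightarrow> real" where
  "log2p y = max (log 2 y) 0"

definition lat_var :: "(nat \<Rightarrow> real) \<Rightarrow> (nat \<Rightarrow> real) \<Rightarrow> nat \<Rightarrow> real" where
  "lat_var s u j = (u j)^2 * s j"

definition water_level :: "nat \<Rightarrow> (nat \<Rightarrow> real) \<Rightarrow> real \<Rightarrow> real" where
  "water_level d lam R = (THE D. D > 0 \<and> (\<Sum>j=1..d. log2p (lam j / D) / 2) = R)"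

definition active :: "nat \<Rightarrow> (nat \<Rightarrow> real) \<Rightarrow> real \<Rightarrow> nat \<Rightarrow> bool" where
  "active d lam R j \<longleftrightarrow> lam j > water_level d lam R"

definition chD :: "nat \<Rightarrow> (nat \<Rightarrow> real) \<Rightarrow> real \<Rightarrow> nat \<Rightarrow> real" where
  "chD d lam R j = min (lam j) (water_level d lam R)"

definition chc :: "nat \<Rightarrow> (nat \<Rightarrow> real) \<Rightarrow> real \<Rightarrow> nat \<Rightarrow> real" where
  "chc d lam R j = (if active d lam R j then 1 - chD d lam R j / lam j else 0)"

definition chtau2 :: "nat \<Rightarrow> (nat \<Rightarrow> real) \<Rightarrow> real \<Rightarrow> nat \<Rightarrow> real" where
  "chtau2 d lam R j = chc d lam R j * water_level d lam R"

definition pae_du :: "(nat \<Rightarrow> real) \<Rightarrow> (nat \<Rightarrow> real) \<Rightarrow> (nat \<Rightarrow> real) \<Rightarrow> nat \<Rightarrow> real" where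
  "pae_du s u v j = 2 * s j * v j * (1 - u j * v j)"

definition pae_dv :: "(nat \<Rightarrow> real) \<Rightarrow> (nat \<Rightarrow> real) \<Rightarrow> (nat \<Rightarrow> real) \<Rightarrow> nat \<Rightarrow> real" where
  "pae_dv s u v j = 2 * s j * u j * (1 - u j * v j)"

definition rd_du :: "nat \<Rightarrow> (nat \<Rightarrow> real) \<Rightarrow> real \<Rightarrow> real \<Rightarrow> (nat \<Rightarrow> real) \<Rightarrow> (nat \<Rightarrow> real) \<Rightarrow> nat \<Rightarrow> real" where
  "rd_du d s R \<beta> u v j =
     2 * s j * v j * (1 - chc d (lat_var s u) R j * u j * v j)
     - 2 * \<beta> * chD d (lat_var s u) R j / u j"

definition rd_dv :: "nat \<Rightarrow> (nat \<Rightarrow> real) \<Rightarrow> real \<Rightarrow> (nat \<Rightarrow> real) \<Rightarrow> (nat \<Rightarrow> real) \<Rightarrow> nat \<Rightarrow> real" where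
  "rd_dv d s R u v j = 2 * s j * chc d (lat_var s u) R j * u j * (1 - u j * v j)"

definition Lrec :: "nat \<Rightarrow> (nat \<Rightarrow> real) \<Rightarrow> real \<Rightarrow> (nat \<Rightarrow> real) \<Rightarrow> (nat \<Rightarrow> real) \<Rightarrow> real" where
  "Lrec d s R u v = (\<Sum>j=1..d. s j * (1 - chc d (lat_var s u) R j * u j * v j)^2
                        + (v j)^2 * chtau2 d (lat_var s u) R j)"

definition gact :: "real \<Rightarrow> (nat \<Rightarrow> real) \<Rightarrow> real \<Rightarrow> nat \<Rightarrow> real" where
  "gact \<epsilon> s T j = 1 / (1 + (1 - \<epsilon>^2) / \<epsilon>^2 * exp (- 4 * s j * T))"

definition m_wu :: "nat \<Rightarrow> (nat \<Rightarrow> real) \<Rightarrow> real \<Rightarrow> real \<Rightarrow> real \<Rightarrow> nat" where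
  "m_wu d s \<epsilon> Twu R = Max {m \<in> {1..d}.
      R > 1/2 * (\<Sum>i=1..m-1. log 2 ((s i * gact \<epsilon> s Twu i) / (s m * gact \<epsilon> s Twu m)))}"

definition delta :: "(nat \<Rightarrow> real) \<Rightarrow> nat \<Rightarrow> real \<Rightarrow> real" where
  "delta s m R = (\<Prod>i=1..m. s i) powr (1 / real m) * 2 powr (- 2 * R / real m)"

end

theory Submission
  imports Defs
begin


lemma deriv_mono:
  fixes f f' :: "real \<Rightarrow> real"
  assumes ab: "a \<le> b"
    and d: "\<And>t. t \<in> {a..b} \<Longrightarrow> (f has_real_derivative f' t) (at t within {a..b})"
    and nn: "\<And>t. t \<in> {a..b} \<Longrightarrow> f' t \<ge> 0"
  shows "f a \<le> f b"
proof (rule DERIV_nonneg_imp_increasing_open[OF ab])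
  fix x assume "a < x" "x < b"
  then show "\<exists>y. DERIV f x :> y \<and> 0 \<le> y"
    using d[of x] nn[of x] by (auto simp: at_within_Icc_at)
next
  show "continuous_on {a..b} f"
    using d by (meson DERIV_continuous continuous_on_eq_continuous_within)
qed

lemma deriv_mono_sub:
  fixes f f' :: "real \<Rightarrow> real"
  assumes d: "\<And>t. t \<in> S \<Longrightarrow> (f has_real_derivative f' t) (at t within S)"
    and nn: "\<And>t. t \<in> S \<Longrightarrow> f' t \<ge> 0"
    and sub: "{x..y} \<subseteq> S" and xy: "x \<le> y"
  shows "f x \<le> f y"
proof (rule deriv_mono[OF xy, of f f'])
  fix t assume t: "t \<in> {x..y}"
  then have "t \<in> S" using sub by blast
  show "(f has_real_derivative f' t) (at t within {x..y})"
    by (rule DERIV_subset[OF d[OF \<open>t \<in> S\<close>] sub])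
  show "0 \<le> f' t" using nn[OF \<open>t \<in> S\<close>] .
qed

lemma deriv_antimono_sub:
  fixes f f' :: "real \<Rightarrow> real"
  assumes d: "\<And>t. t \<in> S \<Longrightarrow> (f has_real_derivative f' t) (at t within S)"
    and nn: "\<And>t. t \<in> S \<Longrightarrow> f' t \<le> 0"
    and sub: "{x..y} \<subseteq> S" and xy: "x \<le> y"
  shows "f y \<le> f x"
proof -
  have "(- f) x \<le> (- f) y"
    apply (rule deriv_mono_sub[of S "- f" "\<lambda>t. - f' t"])
    using d nn sub xy by (auto intro!: derivative_eq_intros simp: fun_Compl_def)
  then show ?thesis by simp
qed

lemma gronwall0:
  fixes h h' :: "real \<Rightarrow> real"
  assumes d: "\<And>t. t \<in> {a..b} \<Longrightarrow> (h has_real_derivative h' t) (at t within {a..b})"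
    and bd: "\<And>t. t \<in> {a..b} \<Longrightarrow> \<bar>h' t\<bar> \<le> K * \<bar>h t\<bar>"
    and t0: "t0 \<in> {a..b}" "h t0 = 0"
    and t: "t \<in> {a..b}"
  shows "h t = 0"
proof -
  have key: "h x * h' x \<le> K * (h x)^2" "- (K * (h x)^2) \<le> h x * h' x" if "x \<in> {a..b}" for x
  proof -
    have "\<bar>h x * h' x\<bar> \<le> K * (h x)^2"
      using bd[OF that] mult_left_mono[OF bd[OF that], of "\<bar>h x\<bar>"]
      by (simp add: abs_mult power2_eq_square mult_ac)
    then show "h x * h' x \<le> K * (h x)^2" "- (K * (h x)^2) \<le> h x * h' x" by linarith+
  qed
  show ?thesis
  proof (cases "t0 \<le> t")
    case True
    let ?q = "\<lambda>x. (h x)^2 * exp (- 2 * K * x)"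
    have "?q t \<le> ?q t0"
    proof (rule deriv_antimono_sub[of "{a..b}" ?q "\<lambda>x. 2 * exp (- 2 * K * x) * (h x * h' x - K * (h x)^2)"])
      fix x assume x: "x \<in> {a..b}"
      show "(?q has_real_derivative 2 * exp (- 2 * K * x) * (h x * h' x - K * (h x)^2)) (at x within {a..b})"
        using d[OF x] by (auto intro!: derivative_eq_intros simp: algebra_simps power2_eq_square)
      show "2 * exp (- 2 * K * x) * (h x * h' x - K * (h x)^2) \<le> 0"
        using key(1)[OF x] by (simp add: mult_nonneg_nonpos)
    qed (use t t0 True in auto)
    then have "(h t)^2 * exp (- 2 * K * t) \<le> 0" using t0 by simp
    then have "(h t)^2 \<le> 0" by (simp add: mult_le_0_iff)
    then show ?thesis by simp
  next
    case False
    let ?q = "\<lambda>x. (h x)^2 * exp (2 * K * x)"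
    have "?q t \<le> ?q t0"
    proof (rule deriv_mono_sub[of "{a..b}" ?q "\<lambda>x. 2 * exp (2 * K * x) * (h x * h' x + K * (h x)^2)"])
      fix x assume x: "x \<in> {a..b}"
      show "(?q has_real_derivative 2 * exp (2 * K * x) * (h x * h' x + K * (h x)^2)) (at x within {a..b})"
        using d[OF x] by (auto intro!: derivative_eq_intros simp: algebra_simps power2_eq_square)
      show "0 \<le> 2 * exp (2 * K * x) * (h x * h' x + K * (h x)^2)"
        using key(2)[OF x] by simp
    qed (use t t0 False in auto)
    then have "(h t)^2 * exp (2 * K * t) \<le> 0" using t0 by simp
    then have "(h t)^2 \<le> 0" by (simp add: mult_le_0_iff)
    then show ?thesis by simp
  qed
qed

lemma cont_bounded:
  fixes f :: "real \<Rightarrow> real"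
  assumes "continuous_on {a..b} f"
  shows "\<exists>B. \<forall>t\<in>{a..b}. \<bar>f t\<bar> \<le> B"
proof -
  have "compact (f ` {a..b})" by (rule compact_continuous_image[OF assms compact_Icc])
  then have "bounded (f ` {a..b})" by (rule compact_imp_bounded)
  then show ?thesis by (auto simp: bounded_real)
qed

lemma deriv_cont:
  fixes f f' :: "real \<Rightarrow> real"
  assumes d: "\<And>t. t \<in> S \<Longrightarrow> (f has_real_derivative f' t) (at t within S)"
  shows "continuous_on S f"
  using d by (meson DERIV_continuous continuous_on_eq_continuous_within)




lemma bound_prod:
  fixes U V U' V' :: "real \<Rightarrow> real"
  assumes dU: "\<And>t. t \<in> {a..b} \<Longrightarrow> (U has_real_derivative U' t) (at t within {a..b})"
    and dV: "\<And>t. t \<in> {a..b} \<Longrightarrow> (V has_real_derivative V' t) (at t within {a..b})"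
  shows "\<exists>B. \<forall>t\<in>{a..b}. \<bar>U t * V t\<bar> \<le> B"
proof -
  have "continuous_on {a..b} (\<lambda>t. U t * V t)"
    using deriv_cont[OF dU] deriv_cont[OF dV] by (intro continuous_intros)
  then show ?thesis by (rule cont_bounded)
qed

lemma warm_phase:
  fixes U V :: "real \<Rightarrow> real"
  assumes dU: "\<And>t. t \<in> {0..T} \<Longrightarrow> (U has_real_derivative 2 * \<sigma> * V t * (1 - U t * V t)) (at t within {0..T})"
    and dV: "\<And>t. t \<in> {0..T} \<Longrightarrow> (V has_real_derivative 2 * \<sigma> * U t * (1 - U t * V t)) (at t within {0..T})"
    and U0: "U 0 = \<epsilon>" and V0: "V 0 = \<epsilon>" and sig: "\<sigma> > 0" and eps: "0 < \<epsilon>" "\<epsilon> < 1" and T: "T \<ge> 0"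
  shows "U T = V T \<and> (U T)^2 = 1 / (1 + (1 - \<epsilon>^2) / \<epsilon>^2 * exp (- 4 * \<sigma> * T))"
proof -
  obtain B where B: "\<And>t. t \<in> {0..T} \<Longrightarrow> \<bar>U t * V t\<bar> \<le> B"
    using bound_prod[OF dU dV] by blast
  have eq: "U t = V t" if t: "t \<in> {0..T}" for t
  proof -
    have d1: "((\<lambda>t. U t - V t) has_real_derivative (- 2 * \<sigma> * (1 - U x * V x) * (U x - V x))) (at x within {0..T})"
      if x: "x \<in> {0..T}" for x
        using DERIV_diff[OF dU[OF x] dV[OF x]] by (simp add: algebra_simps)
    have b1: "\<bar>- 2 * \<sigma> * (1 - U x * V x) * (U x - V x)\<bar> \<le> 2 * \<sigma> * (1 + B) * \<bar>U x - V x\<bar>"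
      if x: "x \<in> {0..T}" for x
    proof -
      have "\<bar>1 - U x * V x\<bar> \<le> 1 + B"
        using B[OF x] abs_triangle_ineq4[of 1 "U x * V x"] by simp
      then have "\<bar>- 2 * \<sigma> * (1 - U x * V x)\<bar> \<le> 2 * \<sigma> * (1 + B)"
        using sig by (simp add: abs_mult)
      then show ?thesis
        by (simp add: abs_mult mult_right_mono)
    qed
    have "U t - V t = 0"
      using gronwall0[where h = "\<lambda>t. U t - V t", OF d1 b1, of 0 t] t T U0 V0 by simp
    then show ?thesis by simp
  qed
  have dU2: "(U has_real_derivative 2 * \<sigma> * (1 - (U t)^2) * U t) (at t within {0..T})" if t: "t \<in> {0..T}" for t
    using dU[OF t] eq[OF t] by (simp add: algebra_simps power2_eq_square)
  obtain B2 where B2: "\<And>t. t \<in> {0..T} \<Longrightarrow> \<bar>U t * U t\<bar> \<le> B2"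
    using bound_prod[OF dU dU] by blast
  have nz: "U t \<noteq> 0" if t: "t \<in> {0..T}" for t
  proof
    assume "U t = 0"
    have b2: "\<bar>2 * \<sigma> * (1 - (U x)^2) * U x\<bar> \<le> 2 * \<sigma> * (1 + B2) * \<bar>U x\<bar>"
      if x: "x \<in> {0..T}" for x
    proof -
      have "\<bar>1 - U x * U x\<bar> \<le> 1 + B2"
        using B2[OF x] abs_triangle_ineq4[of 1 "U x * U x"] by simp
      then have "\<bar>2 * \<sigma> * (1 - (U x)^2)\<bar> \<le> 2 * \<sigma> * (1 + B2)"
        using sig by (simp add: abs_mult power2_eq_square)
      then show ?thesis
        by (simp add: abs_mult mult_right_mono)
    qed
    have "U 0 = 0"
      using gronwall0[where h = U, OF dU2 b2, of t 0] t T \<open>U t = 0\<close> by simp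
    then show False using U0 eps by simp
  qed
  define G where "G t = (1 / (U t)^2 - 1) * exp (4 * \<sigma> * t)" for t
  have dG: "(G has_real_derivative 0) (at t within {0..T})" if t: "t \<in> {0..T}" for t
  proof -
    have "(G has_real_derivative
       (- (2 * U t * (2 * \<sigma> * (1 - (U t)^2) * U t)) / ((U t)^2)^2) * exp (4 * \<sigma> * t)
        + (1 / (U t)^2 - 1) * (exp (4 * \<sigma> * t) * (4 * \<sigma>))) (at t within {0..T})"
      unfolding G_def using dU2[OF t] nz[OF t]
      by (auto intro!: derivative_eq_intros simp: power2_eq_square)
    moreover have "(- (2 * U t * (2 * \<sigma> * (1 - (U t)^2) * U t)) / ((U t)^2)^2) * exp (4 * \<sigma> * t)
        + (1 / (U t)^2 - 1) * (exp (4 * \<sigma> * t) * (4 * \<sigma>)) = 0"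
      using nz[OF t] by (simp add: field_simps power2_eq_square)
    ultimately show ?thesis by simp
  qed
  have "G T \<le> G 0" by (rule deriv_antimono_sub[OF dG]) (use T in auto)
  moreover have "G 0 \<le> G T" by (rule deriv_mono_sub[OF dG]) (use T in auto)
  ultimately have GT: "G T = 1 / \<epsilon>^2 - 1" using U0 by (simp add: G_def)
  have "1 / (U T)^2 = 1 + (1 / \<epsilon>^2 - 1) * exp (- 4 * \<sigma> * T)"
    using GT unfolding G_def by (simp add: exp_minus field_simps)
  moreover have "(1 - \<epsilon>^2) / \<epsilon>^2 = 1 / \<epsilon>^2 - 1" using eps by (simp add: field_simps)
  ultimately have "(U T)^2 = 1 / (1 + (1 - \<epsilon>^2) / \<epsilon>^2 * exp (- 4 * \<sigma> * T))"
    by (metis divide_divide_eq_right div_by_1 mult_1 nonzero_mult_div_cancel_left divide_eq_0_iff one_neq_zero nz T atLeastAtMost_iff order_refl power_not_zero)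
  then show ?thesis using eq T by simp
qed




lemma rd_phase:
  fixes U V C :: "real \<Rightarrow> real"
  assumes dU: "\<And>t. t \<in> {a..b} \<Longrightarrow> (U has_real_derivative 2 * \<sigma> * V t * (1 - C t * U t * V t) - 2 * \<sigma> * U t * (1 - C t)) (at t within {a..b})"
    and dV: "\<And>t. t \<in> {a..b} \<Longrightarrow> (V has_real_derivative 2 * \<sigma> * C t * U t * (1 - U t * V t)) (at t within {a..b})"
    and C: "\<And>t. t \<in> {a..b} \<Longrightarrow> 0 \<le> C t \<and> C t \<le> 1"
    and Ua: "U a = V a" "0 < (U a)^2" "(U a)^2 < 1" and sig: "\<sigma> > 0" and ab: "a \<le> b"
    and t: "t \<in> {a..b}"
  shows "U t = V t \<and> 0 < (U t)^2 \<and> (U t)^2 < 1 \<and> (U a)^2 \<le> (U t)^2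
    \<and> ((\<lambda>\<tau>. (U \<tau>)^2) has_real_derivative 4 * \<sigma> * C t * (U t)^2 * (1 - (U t)^2)) (at t within {a..b})"
proof -
  obtain B where B: "\<And>t. t \<in> {a..b} \<Longrightarrow> \<bar>U t * V t\<bar> \<le> B"
    using bound_prod[OF dU dV] by blast
  have eq: "U x = V x" if x: "x \<in> {a..b}" for x
  proof -
    have d1: "((\<lambda>t. U t - V t) has_real_derivative (- 2 * \<sigma> * (1 - C x * U x * V x) * (U x - V x))) (at x within {a..b})"
      if x: "x \<in> {a..b}" for x
        using DERIV_diff[OF dU[OF x] dV[OF x]] by (simp add: algebra_simps)
    have b1: "\<bar>- 2 * \<sigma> * (1 - C x * U x * V x) * (U x - V x)\<bar> \<le> 2 * \<sigma> * (1 + B) * \<bar>U x - V x\<bar>"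
      if x: "x \<in> {a..b}" for x
    proof -
      have "\<bar>C x * (U x * V x)\<bar> \<le> \<bar>U x * V x\<bar>"
        using C[OF x] by (simp add: abs_mult mult_left_le_one_le)
      then have "\<bar>1 - C x * U x * V x\<bar> \<le> 1 + B"
        using B[OF x] abs_triangle_ineq4[of 1 "C x * U x * V x"] by (simp add: mult.assoc)
      then have "\<bar>- 2 * \<sigma> * (1 - C x * U x * V x)\<bar> \<le> 2 * \<sigma> * (1 + B)"
        using sig by (simp add: abs_mult)
      then show ?thesis
        by (simp add: abs_mult mult_right_mono)
    qed
    have "U x - V x = 0"
      using gronwall0[where h = "\<lambda>t. U t - V t", OF d1 b1, of a x] x ab Ua by simp
    then show ?thesis by simp
  qed
  have dU2: "(U has_real_derivative 2 * \<sigma> * C x * (1 - (U x)^2) * U x) (at x within {a..b})" if x: "x \<in> {a..b}" for x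
  proof -
    have "2 * \<sigma> * V x * (1 - C x * U x * V x) - 2 * \<sigma> * U x * (1 - C x) = 2 * \<sigma> * C x * (1 - (U x)^2) * U x"
      using eq[OF x] by (simp add: algebra_simps power2_eq_square)
    then show ?thesis using dU[OF x] by simp
  qed
  obtain B2 where B2: "\<And>t. t \<in> {a..b} \<Longrightarrow> \<bar>U t * U t\<bar> \<le> B2"
    using bound_prod[OF dU dU] by blast
  have nz: "U x \<noteq> 0" if x: "x \<in> {a..b}" for x
  proof
    assume "U x = 0"
    have b2: "\<bar>2 * \<sigma> * C y * (1 - (U y)^2) * U y\<bar> \<le> 2 * \<sigma> * (1 + B2) * \<bar>U y\<bar>"
      if y: "y \<in> {a..b}" for y
    proof -
      have "\<bar>1 - U y * U y\<bar> \<le> 1 + B2"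
        using B2[OF y] abs_triangle_ineq4[of 1 "U y * U y"] by simp
      then have "\<bar>C y * (1 - U y * U y)\<bar> \<le> 1 + B2"
        using C[OF y] by (simp add: abs_mult) (meson mult_left_le_one_le abs_ge_zero order_trans)
      then have "\<bar>2 * \<sigma> * C y * (1 - (U y)^2)\<bar> \<le> 2 * \<sigma> * (1 + B2)"
        using sig by (simp add: abs_mult power2_eq_square)
      then show ?thesis
        by (simp add: abs_mult mult_right_mono)
    qed
    have "U a = 0"
      using gronwall0[where h = U, OF dU2 b2, of x a] x ab \<open>U x = 0\<close> by simp
    then show False using Ua by simp
  qed
  have dZ: "((\<lambda>\<tau>. 1 - (U \<tau>)^2) has_real_derivative (- 4 * \<sigma> * C x * (U x)^2) * (1 - (U x)^2)) (at x within {a..b})"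
    if x: "x \<in> {a..b}" for x
    using dU2[OF x] by (auto intro!: derivative_eq_intros simp: algebra_simps power2_eq_square)
  have bZ: "\<bar>(- 4 * \<sigma> * C x * (U x)^2) * (1 - (U x)^2)\<bar> \<le> 4 * \<sigma> * B2 * \<bar>1 - (U x)^2\<bar>"
    if x: "x \<in> {a..b}" for x
  proof -
    have "C x * (U x * U x) \<le> U x * U x"
      using C[OF x] by (simp add: mult_left_le_one_le)
    then have "\<bar>C x * (U x * U x)\<bar> \<le> B2"
      using C[OF x] B2[OF x] by (simp add: abs_mult)
    then have "\<bar>- 4 * \<sigma> * C x * (U x)^2\<bar> \<le> 4 * \<sigma> * B2"
      using sig by (simp add: abs_mult power2_eq_square)
    then show ?thesis by (simp add: abs_mult mult_right_mono)
  qed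
  have zc: "continuous_on {a..b} (\<lambda>\<tau>. 1 - (U \<tau>)^2)" by (rule deriv_cont[OF dZ])
  have zpos: "1 - (U x)^2 > 0" if x: "x \<in> {a..b}" for x
  proof (rule ccontr)
    assume "\<not> 1 - (U x)^2 > 0"
    then obtain y where y: "a \<le> y" "y \<le> x" "1 - (U y)^2 = 0"
      using IVT2'[of "\<lambda>\<tau>. 1 - (U \<tau>)^2" x 0 a] Ua x continuous_on_subset[OF zc, of "{a..x}"] by auto
    have "1 - (U a)^2 = 0"
      using gronwall0[where h = "\<lambda>\<tau>. 1 - (U \<tau>)^2", OF dZ bZ, of y a] x y ab by simp
    then show False using Ua by simp
  qed
  have dW: "((\<lambda>\<tau>. (U \<tau>)^2) has_real_derivative 4 * \<sigma> * C x * (U x)^2 * (1 - (U x)^2)) (at x within {a..b})"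
    if x: "x \<in> {a..b}" for x
    using dU2[OF x] by (auto intro!: derivative_eq_intros simp: algebra_simps power2_eq_square)
  have mono: "(U a)^2 \<le> (U t)^2"
  proof (rule deriv_mono_sub[OF dW])
    fix x assume x: "x \<in> {a..b}"
    show "0 \<le> 4 * \<sigma> * C x * (U x)^2 * (1 - (U x)^2)"
      using C[OF x] zpos[OF x] sig by simp
  qed (use t in auto)
  show ?thesis using eq[OF t] nz[OF t] zpos[OF t] mono dW[OF t] by simp
qed




definition Phi :: "nat \<Rightarrow> (nat \<Rightarrow> real) \<Rightarrow> real \<Rightarrow> real" where
  "Phi d lam D = (\<Sum>j=1..d. log2p (lam j / D) / 2)"

lemma log2p_nonneg: "log2p y \<ge> 0" by (simp add: log2p_def)

lemma log2p_zero[simp]: "log2p 0 = 0" by (simp add: log2p_def log_def)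

lemma log2p_mono:
  assumes "0 \<le> y" "y \<le> y'" shows "log2p y \<le> log2p y'"
proof (cases "y = 0")
  case True then show ?thesis by (simp add: log2p_nonneg)
next
  case False
  then have "log 2 y \<le> log 2 y'" using assms by (intro log_mono) auto
  then show ?thesis by (auto simp: log2p_def)
qed

lemma log2p_anti:
  assumes "0 < D" "D \<le> D'" "l \<ge> 0"
  shows "log2p (l / D') \<le> log2p (l / D)"
proof (cases "l = 0")
  case True then show ?thesis by simp
next
  case False
  then have "l > 0" using assms by simp
  then have "log 2 (l / D') \<le> log 2 (l / D)"
    using assms by (simp add: divide_left_mono)
  then show ?thesis by (auto simp: log2p_def)
qed

lemma log2p_strict:
  assumes "0 < D" "D < D'" "l > D'"
  shows "log2p (l / D') < log2p (l / D)"
proof -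
  have "l / D' < l / D" using assms by (simp add: divide_strict_left_mono)
  moreover have "l / D' > 1" using assms by simp
  ultimately have "log 2 (l / D') < log 2 (l / D)" "log 2 (l / D') > 0" using assms by auto
  then show ?thesis by (auto simp: log2p_def)
qed

lemma log2p_le1:
  assumes "0 \<le> y" "y \<le> 1" shows "log2p y = 0"
proof (cases "y = 0")
  case True then show ?thesis by simp
next
  case False
  then have "log 2 y \<le> log 2 1" using assms by (intro log_mono) auto
  then show ?thesis by (simp add: log2p_def)
qed

lemma log2p_gt1: "y > 1 \<Longrightarrow> log2p y = log 2 y"
  by (auto simp: log2p_def)

lemma Phi_anti:
  assumes "0 < D" "D \<le> D'" "\<forall>i\<in>{1..d}. lam i \<ge> 0"
  shows "Phi d lam D' \<le> Phi d lam D"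
  unfolding Phi_def by (rule sum_mono) (use assms log2p_anti in auto)

lemma Phi_strict:
  assumes "0 < D" "D < D'" "\<forall>i\<in>{1..d}. lam i \<ge> 0" "Phi d lam D' > 0"
  shows "Phi d lam D' < Phi d lam D"
proof -
  obtain k where k: "k \<in> {1..d}" "log2p (lam k / D') / 2 \<noteq> 0"
    using assms(4) unfolding Phi_def by (metis (no_types, lifting) less_irrefl sum.neutral)
  have "lam k / D' \<ge> 0" using assms k by simp
  then have "lam k / D' > 1" using log2p_le1 k by fastforce
  then have "lam k > D'" using assms by (simp add: field_simps)
  show ?thesis unfolding Phi_def
  proof (rule sum_strict_mono_ex1)
    show "\<forall>x\<in>{1..d}. log2p (lam x / D') / 2 \<le> log2p (lam x / D) / 2"
      using assms log2p_anti by auto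
    show "\<exists>a\<in>{1..d}. log2p (lam a / D') / 2 < log2p (lam a / D) / 2"
      using k \<open>lam k > D'\<close> log2p_strict[of D D' "lam k"] assms by auto
  qed simp
qed

lemma Phi_cont:
  assumes "0 < a"
  shows "continuous_on {a..b} (Phi d lam)"
  unfolding Phi_def
proof (intro continuous_intros)
  fix j
  show "continuous_on {a..b} (\<lambda>x. log2p (lam j / x))"
  proof (cases "lam j = 0")
    case True then show ?thesis by (simp add: log2p_def)
  next
    case False
    then show ?thesis unfolding log2p_def using assms by (intro continuous_intros) auto
  qed
qed auto

lemma wl_prop:
  assumes R: "R > 0" and nn: "\<forall>i\<in>{1..d}. lam i \<ge> 0" and k: "k \<in> {1..d}" "lam k > 0"
  shows "water_level d lam R > 0 \<and> Phi d lam (water_level d lam R) = R"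
proof -
  define D1 where "D1 = lam k * 2 powr (- 2 * R)"
  define D2 where "D2 = lam k + (\<Sum>j=1..d. lam j)"
  have D1pos: "D1 > 0" using k by (simp add: D1_def)
  have "2 powr (- 2 * R) < 2 powr 0" using R by (intro powr_less_mono) auto
  then have "2 powr (- 2 * R) < 1" by simp
  then have D12: "D1 \<le> D2"
    using k nn by (simp add: D1_def D2_def) (smt (verit) mult_left_le sum_nonneg)
  have "Phi d lam D2 = 0" unfolding Phi_def
  proof (rule sum.neutral, safe)
    fix j assume j: "j \<in> {1..d}"
    have "lam j \<le> (\<Sum>j=1..d. lam j)" using j nn by (intro member_le_sum) auto
    have "(\<Sum>j=1..d. lam j) \<ge> 0" using nn by (intro sum_nonneg) auto
    then have "D2 > 0" using k by (simp add: D2_def)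
    have l1: "lam j / D2 \<le> 1" using k nn j \<open>lam j \<le> _\<close> \<open>D2 > 0\<close> by (simp add: D2_def divide_le_eq_1)
    have l0: "lam j / D2 \<ge> 0" using nn j \<open>D2 > 0\<close> by simp
    show "log2p (lam j / D2) / 2 = 0" using log2p_le1[OF l0 l1] by simp
  qed
  moreover have "Phi d lam D1 \<ge> R"
  proof -
    have "Phi d lam D1 \<ge> log2p (lam k / D1) / 2" unfolding Phi_def
      using k by (intro member_le_sum) (auto simp: log2p_nonneg)
    moreover have "lam k / D1 = 2 powr (2 * R)" using k by (simp add: D1_def powr_minus divide_simps)
    moreover have "log2p (2 powr (2 * R)) = 2 * R" using R by (simp add: log2p_def)
    ultimately show ?thesis by simp
  qed
  ultimately obtain D where D: "D1 \<le> D" "D \<le> D2" "Phi d lam D = R"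
    using IVT2'[of "Phi d lam" D2 R D1, OF _ _ D12 Phi_cont[OF D1pos]] R by auto
  have ex: "D > 0 \<and> Phi d lam D = R" using D D1pos by simp
  have uniq: "D' = D" if "D' > 0 \<and> Phi d lam D' = R" for D'
  proof (rule ccontr)
    assume "D' \<noteq> D"
    then consider "D' < D" | "D < D'" by linarith
    then show False
    proof cases
      case 1 then show ?thesis using Phi_strict[of D' D d lam] that ex nn R by auto
    next
      case 2 then show ?thesis using Phi_strict[of D D' d lam] that ex nn R by auto
    qed
  qed
  have "water_level d lam R = (THE D'. D' > 0 \<and> Phi d lam D' = R)"
    by (simp add: water_level_def Phi_def)
  also have "\<dots> = D"
    by (rule the_equality) (use ex uniq in blast)+
  finally have "water_level d lam R = D" .
  then show ?thesis using ex by simp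
qed

lemma wl_mono:
  assumes R: "R > 0" and nn: "\<forall>i\<in>{1..d}. lam i \<ge> 0" and k: "k \<in> {1..d}" "lam k > 0"
    and le: "\<forall>i\<in>{1..d}. lam i \<le> lam' i"
  shows "water_level d lam R \<le> water_level d lam' R"
proof (rule ccontr)
  let ?D = "water_level d lam R" and ?D' = "water_level d lam' R"
  have nn': "\<forall>i\<in>{1..d}. lam' i \<ge> 0"
  proof
    fix i assume "i \<in> {1..d}"
    then show "lam' i \<ge> 0" using nn le by (meson order_trans)
  qed
  have P: "?D > 0" "Phi d lam ?D = R" using wl_prop[OF R nn k] by auto
  have P': "?D' > 0" "Phi d lam' ?D' = R" using wl_prop[OF R nn' k(1)] k le by force+
  assume "\<not> ?D \<le> ?D'"
  then have lt: "?D' < ?D" by simp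
  have "Phi d lam ?D \<le> Phi d lam' ?D" unfolding Phi_def
    using le nn P(1) by (intro sum_mono divide_right_mono log2p_mono) (auto intro!: divide_right_mono)
  then have "Phi d lam' ?D > 0" using P R by simp
  then have "Phi d lam' ?D < Phi d lam' ?D'" using Phi_strict[OF P'(1) lt nn'] by simp
  then show False using P P' \<open>Phi d lam ?D \<le> Phi d lam' ?D\<close> by simp
qed




lemma lat_var_nn: "(\<And>i. i \<in> {1..d} \<Longrightarrow> s i > 0) \<Longrightarrow> \<forall>i\<in>{1..d}. lat_var s u i \<ge> 0"
  by (auto simp: lat_var_def less_imp_le)

lemma ch_props:
  assumes sp: "\<And>i. i \<in> {1..d} \<Longrightarrow> s i > 0" and R: "R > 0" and j: "j \<in> {1..d}"
  shows "0 \<le> chc d (lat_var s u) R j \<and> chc d (lat_var s u) R j \<le> 1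
     \<and> chD d (lat_var s u) R j / u j = s j * u j * (1 - chc d (lat_var s u) R j)"
proof (cases "u j = 0")
  case True
  then have l0: "lat_var s u j = 0" by (simp add: lat_var_def)
  show ?thesis using True l0 by (auto simp: chc_def chD_def active_def)
next
  case False
  let ?l = "lat_var s u"
  have lp: "?l j > 0" using False sp[OF j] by (simp add: lat_var_def)
  have wp: "water_level d ?l R > 0"
    using wl_prop[OF R lat_var_nn[OF sp] j lp] by simp
  show ?thesis
  proof (cases "active d ?l R j")
    case True
    then have gt: "?l j > water_level d ?l R" by (simp add: active_def)
    then have c: "chc d ?l R j = 1 - water_level d ?l R / ?l j" and D: "chD d ?l R j = water_level d ?l R"
      using True by (auto simp: chc_def chD_def)
    have "water_level d ?l R / ?l j < 1" using gt lp by simp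
    moreover have "water_level d ?l R / ?l j \<ge> 0" using wp lp by simp
    moreover have "water_level d ?l R / u j = s j * u j * (water_level d ?l R / ?l j)"
      using False sp[OF j] by (simp add: lat_var_def field_simps power2_eq_square)
    ultimately show ?thesis using c D by simp
  next
    case False
    then have c: "chc d ?l R j = 0" and D: "chD d ?l R j = ?l j"
      by (auto simp: chc_def chD_def active_def)
    have "?l j / u j = s j * u j" using \<open>u j \<noteq> 0\<close> by (simp add: lat_var_def power2_eq_square)
    then show ?thesis using c D by simp
  qed
qed

lemma term_bound:
  fixes s w x :: real
  assumes "s > 0" "x \<le> 1"
  shows "s * (1 - (1 - x) * w)^2 + w * ((1 - x) * (x * w * s)) \<ge> s * x"
proof -
  have "s * (1 - (1 - x) * w)^2 + w * ((1 - x) * (x * w * s)) - s * x = s * (1 - x) * (1 - w)^2"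
    by (simp add: algebra_simps power2_eq_square)
  moreover have "s * (1 - x) * (1 - w)^2 \<ge> 0" using assms by simp
  ultimately show ?thesis by linarith
qed




theorem theorem1:
  fixes d :: nat and s :: "nat \<Rightarrow> real" and \<epsilon> R Twu Linf :: real
    and u v :: "real \<Rightarrow> nat \<Rightarrow> real"
  assumes d_pos: "d \<ge> 1"
    and s_pos: "s d > 0"
    and s_decr: "\<And>i j. 1 \<le> i \<Longrightarrow> i < j \<Longrightarrow> j \<le> d \<Longrightarrow> s j < s i"
    and eps: "0 < \<epsilon>" "\<epsilon> < 1"
    and R_pos: "R > 0"
    and Twu: "Twu \<ge> 0"
    and init_u: "\<And>j. j \<in> {1..d} \<Longrightarrow> u 0 j = \<epsilon>"
    and init_v: "\<And>j. j \<in> {1..d} \<Longrightarrow> v 0 j = \<epsilon>"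
    and warm_u: "\<And>j t. j \<in> {1..d} \<Longrightarrow> t \<in> {0..Twu} \<Longrightarrow>
        ((\<lambda>\<tau>. u \<tau> j) has_real_derivative pae_du s (u t) (v t) j) (at t within {0..Twu})"
    and warm_v: "\<And>j t. j \<in> {1..d} \<Longrightarrow> t \<in> {0..Twu} \<Longrightarrow>
        ((\<lambda>\<tau>. v \<tau> j) has_real_derivative pae_dv s (u t) (v t) j) (at t within {0..Twu})"
    and rd_u: "\<And>j t. j \<in> {1..d} \<Longrightarrow> t \<ge> Twu \<Longrightarrow>
        ((\<lambda>\<tau>. u \<tau> j) has_real_derivative rd_du d s R 1 (u t) (v t) j) (at t within {Twu..})"
    and rd_v: "\<And>j t. j \<in> {1..d} \<Longrightarrow> t \<ge> Twu \<Longrightarrow>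
        ((\<lambda>\<tau>. v \<tau> j) has_real_derivative rd_dv d s R (u t) (v t) j) (at t within {Twu..})"
    and conv: "((\<lambda>t. Lrec d s R (u t) (v t)) \<longlongrightarrow> Linf) at_top"
  shows "(\<forall>\<^sub>F t in at_top.
            card {j \<in> {1..d}. active d (lat_var s (u t)) R j} \<le> m_wu d s \<epsilon> Twu R)
       \<and> Linf \<ge> real (m_wu d s \<epsilon> Twu R) * delta s (m_wu d s \<epsilon> Twu R) R
               + (\<Sum>j\<in>{m_wu d s \<epsilon> Twu R + 1..d}. s j)"
proof -
  have sp: "s i > 0" if "i \<in> {1..d}" for i
    using that s_pos s_decr[of i d] by (cases "i = d") auto
  define g where "g j = gact \<epsilon> s Twu j" for j
  define lam where "lam t = lat_var s (u t)" for t
  define wl where "wl t = water_level d (lam t) R" for t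
  define c where "c t j = chc d (lam t) R j" for t j
  define m where "m = m_wu d s \<epsilon> Twu R"
  have g01: "0 < g j \<and> g j < 1" if "j \<in> {1..d}" for j
  proof -
    have a: "(1 - \<epsilon>^2) / \<epsilon>^2 * exp (- 4 * s j * Twu) > 0"
      using eps by (simp add: power_less_one_iff abs_less_iff)
    then show ?thesis by (simp add: g_def gact_def)
  qed
  have ph1: "u Twu j = v Twu j \<and> (u Twu j)^2 = g j" if j: "j \<in> {1..d}" for j
  proof -
    have "(\<lambda>\<tau>. u \<tau> j) Twu = (\<lambda>\<tau>. v \<tau> j) Twu \<and> ((\<lambda>\<tau>. u \<tau> j) Twu)^2 = 1 / (1 + (1 - \<epsilon>^2) / \<epsilon>^2 * exp (- 4 * s j * Twu))"
    proof (rule warm_phase[where \<sigma> = "s j" and \<epsilon> = \<epsilon>])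
      fix t assume t: "t \<in> {0..Twu}"
      show "((\<lambda>\<tau>. u \<tau> j) has_real_derivative 2 * s j * v t j * (1 - u t j * v t j)) (at t within {0..Twu})"
        using warm_u[OF j t] by (simp add: pae_du_def)
      show "((\<lambda>\<tau>. v \<tau> j) has_real_derivative 2 * s j * u t j * (1 - u t j * v t j)) (at t within {0..Twu})"
        using warm_v[OF j t] by (simp add: pae_dv_def)
    qed (use init_u[OF j] init_v[OF j] sp[OF j] eps Twu in auto)
    then show ?thesis unfolding g_def gact_def by blast
  qed
  have ph2: "u x j = v x j \<and> 0 < (u x j)^2 \<and> (u x j)^2 < 1 \<and> (u Twu j)^2 \<le> (u x j)^2
    \<and> ((\<lambda>\<tau>. (u \<tau> j)^2) has_real_derivative 4 * s j * c x j * (u x j)^2 * (1 - (u x j)^2)) (at x within {Twu..t})"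
    if j: "j \<in> {1..d}" and t: "t \<ge> Twu" and x: "x \<in> {Twu..t}" for j t x
  proof -
    have cp: "0 \<le> c y j \<and> c y j \<le> 1 \<and> chD d (lam y) R j / u y j = s j * u y j * (1 - c y j)" for y
      using ch_props[OF sp R_pos j, where u = "u y"] by (simp add: c_def lam_def)
    have A: "((\<lambda>\<tau>. u \<tau> j) has_real_derivative 2 * s j * v y j * (1 - c y j * u y j * v y j) - 2 * s j * u y j * (1 - c y j)) (at y within {Twu..t})"
      if y: "y \<in> {Twu..t}" for y
    proof -
      have "rd_du d s R 1 (u y) (v y) j = 2 * s j * v y j * (1 - c y j * u y j * v y j) - 2 * s j * u y j * (1 - c y j)"
        using cp[of y] by (simp add: rd_du_def c_def lam_def)
      then show ?thesis using DERIV_subset[OF rd_u[OF j, of y]] y by auto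
    qed
    have B: "((\<lambda>\<tau>. v \<tau> j) has_real_derivative 2 * s j * c y j * u y j * (1 - u y j * v y j)) (at y within {Twu..t})"
      if y: "y \<in> {Twu..t}" for y
      using DERIV_subset[OF rd_v[OF j, of y]] y by (auto simp: rd_dv_def c_def lam_def)
    have C: "0 \<le> c y j \<and> c y j \<le> 1" for y using cp[of y] by simp
    have U1: "u Twu j = v Twu j" and U2: "0 < (u Twu j)^2" and U3: "(u Twu j)^2 < 1"
      using ph1[OF j] g01[OF j] by auto
    show ?thesis
      using rd_phase[where U = "\<lambda>\<tau>. u \<tau> j" and V = "\<lambda>\<tau>. v \<tau> j" and C = "\<lambda>y. c y j" and \<sigma> = "s j",
          OF A B C U1 U2 U3 sp[OF j] t x] by blast
  qed
  have pt: "u t j = v t j \<and> 0 < (u t j)^2 \<and> (u t j)^2 < 1 \<and> (u Twu j)^2 \<le> (u t j)^2"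
    if j: "j \<in> {1..d}" and t: "t \<ge> Twu" for j t
    using ph2[OF j t, of t] t by auto
  have d1: "1 \<in> {1..d}" using d_pos by simp
  have lampos: "lam t i > 0" if "t \<ge> Twu" "i \<in> {1..d}" for t i
    using pt[OF that(2,1)] sp[OF that(2)] by (simp add: lam_def lat_var_def)
  have nn: "\<forall>i\<in>{1..d}. lam t i \<ge> 0" if "t \<ge> Twu" for t
    using lampos[OF that] by (simp add: less_imp_le)
  have wlp: "wl t > 0 \<and> Phi d (lam t) (wl t) = R" if "t \<ge> Twu" for t
    using wl_prop[OF R_pos nn[OF that] d1 lampos[OF that d1]] by (simp add: wl_def)
  have lamle: "lam Twu i \<le> lam t i" if "t \<ge> Twu" "i \<in> {1..d}" for t i
  proof -
    have "(u Twu i)^2 \<le> (u t i)^2" using pt[OF that(2,1)] by blast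
    then show ?thesis using sp[OF that(2)] by (simp add: lam_def lat_var_def mult_right_mono)
  qed
  have wlmono: "wl Twu \<le> wl t" if "t \<ge> Twu" for t
    unfolding wl_def
    by (rule wl_mono[OF R_pos nn[OF order_refl] d1 lampos[OF order_refl d1]]) (use lamle[OF that] in auto)
  have lamT: "lam Twu i = s i * g i" if "i \<in> {1..d}" for i
  proof -
    have "(u Twu i)^2 = g i" using ph1[OF that] by blast
    then show ?thesis by (simp add: lam_def lat_var_def)
  qed
  define Sm where "Sm = {m \<in> {1..d}.
      R > 1/2 * (\<Sum>i=1..m-1. log 2 ((s i * gact \<epsilon> s Twu i) / (s m * gact \<epsilon> s Twu m)))}"
  have m_eq: "m = Max Sm" by (simp add: m_def m_wu_def Sm_def)
  have Sm_fin: "finite Sm" by (simp add: Sm_def)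
  have one_Sm: "1 \<in> Sm" using d_pos R_pos by (simp add: Sm_def)
  have m_in: "m \<in> Sm" using m_eq Max_in[OF Sm_fin] one_Sm by auto
  then have m_rng: "1 \<le> m" "m \<le> d" by (auto simp: Sm_def)
  have not_Sm: "R \<le> 1/2 * (\<Sum>i=1..j-1. log 2 (lam Twu i / lam Twu j))"
    if j: "j \<in> {1..d}" "m < j" for j
  proof -
    have "j \<notin> Sm" using j m_eq Max_ge[OF Sm_fin] by force
    then have "\<not> R > 1/2 * (\<Sum>i=1..j-1. log 2 ((s i * g i) / (s j * g j)))"
      using j by (simp add: Sm_def g_def)
    moreover have "(\<Sum>i=1..j-1. log 2 ((s i * g i) / (s j * g j))) = (\<Sum>i=1..j-1. log 2 (lam Twu i / lam Twu j))"
      by (rule sum.cong) (use j lamT in auto)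
    ultimately show ?thesis by simp
  qed
  have gmono: "g j \<le> g i" if "i \<in> {1..d}" "j \<in> {1..d}" "i < j" for i j
  proof -
    have "s j < s i" using s_decr that by auto
    then have "exp (- 4 * s i * Twu) \<le> exp (- 4 * s j * Twu)" using Twu by (simp add: mult_right_mono)
    moreover have "(1 - \<epsilon>^2) / \<epsilon>^2 \<ge> 0" using eps by (simp add: power_le_one)
    ultimately have "(1 - \<epsilon>^2) / \<epsilon>^2 * exp (- 4 * s i * Twu) \<le> (1 - \<epsilon>^2) / \<epsilon>^2 * exp (- 4 * s j * Twu)"
      by (rule mult_left_mono)
    moreover have "0 \<le> (1 - \<epsilon>^2) / \<epsilon>^2 * exp (- 4 * s i * Twu)"
      using \<open>(1 - \<epsilon>^2) / \<epsilon>^2 \<ge> 0\<close> by (intro mult_nonneg_nonneg) auto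
    ultimately have "1 / (1 + (1 - \<epsilon>^2) / \<epsilon>^2 * exp (- 4 * s j * Twu)) \<le> 1 / (1 + (1 - \<epsilon>^2) / \<epsilon>^2 * exp (- 4 * s i * Twu))"
      by (intro divide_left_mono mult_pos_pos) auto
    then show ?thesis by (simp add: g_def gact_def)
  qed
  have lam_decr: "lam Twu j < lam Twu i" if "i \<in> {1..d}" "j \<in> {1..d}" "i < j" for i j
  proof -
    have "s j < s i" using s_decr that by auto
    then have "s j * g j < s i * g j" using g01[OF that(2)] by simp
    also have "\<dots> \<le> s i * g i" using gmono[OF that] sp[OF that(1)] by (simp add: mult_left_mono)
    finally show ?thesis using lamT that by simp
  qed
  have inactT: "lam Twu j \<le> wl Twu" if j: "j \<in> {1..d}" "m < j" for j
  proof (rule ccontr)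
    let ?L = "lam Twu" and ?W = "wl Twu"
    assume "\<not> ?L j \<le> ?W"
    then have lt: "?W < ?L j" by simp
    have Wp: "?W > 0" using wlp[OF order_refl] by simp
    have "R = (\<Sum>i=1..d. log2p (?L i / ?W) / 2)" using wlp[OF order_refl] by (simp add: Phi_def)
    also have "\<dots> \<ge> (\<Sum>i=1..j. log2p (?L i / ?W) / 2)"
      by (rule sum_mono2) (use j in \<open>auto simp: log2p_nonneg\<close>)
    finally have R1: "R \<ge> (\<Sum>i=1..j-1. log2p (?L i / ?W) / 2) + log2p (?L j / ?W) / 2"
      using j by (cases j) auto
    have "log2p (?L j / ?W) > 0" using lt Wp by (simp add: log2p_def)
    moreover have "(\<Sum>i=1..j-1. log2p (?L i / ?W) / 2) \<ge> (\<Sum>i=1..j-1. log 2 (?L i / ?L j) / 2)"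
    proof (rule sum_mono)
      fix i assume i: "i \<in> {1..j-1}"
      then have i': "i \<in> {1..d}" "i < j" using j by auto
      have "?L i > 0" "?L j > 0" using lampos[OF order_refl] i' j by auto
      then have "log 2 (?L i / ?L j) \<le> log 2 (?L i / ?W)"
        using lt Wp by (intro log_mono) (auto intro!: divide_left_mono)
      also have "\<dots> \<le> log2p (?L i / ?W)" by (simp add: log2p_def)
      finally show "log 2 (?L i / ?L j) / 2 \<le> log2p (?L i / ?W) / 2" by simp
    qed
    ultimately have "R > 1/2 * (\<Sum>i=1..j-1. log 2 (?L i / ?L j))"
      using R1 by (simp add: sum_divide_distrib)
    then show False using not_Sm[OF j] by simp
  qed
  have frozen: "lam t j = lam Twu j" if j: "j \<in> {1..d}" "m < j" and t: "t \<ge> Twu" for j t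
  proof -
    define h where "h \<tau> = s j * (u \<tau> j)^2 - s j * (u Twu j)^2" for \<tau>
    have hl: "h x = lam x j - lam Twu j" for x by (simp add: h_def lam_def lat_var_def mult.commute)
    define h' where "h' x = s j * (4 * s j * c x j * (u x j)^2 * (1 - (u x j)^2))" for x
    have dh: "(h has_real_derivative h' x) (at x within {Twu..t})" if x: "x \<in> {Twu..t}" for x
    proof -
      have dsq: "((\<lambda>\<tau>. (u \<tau> j)^2) has_real_derivative 4 * s j * c x j * (u x j)^2 * (1 - (u x j)^2)) (at x within {Twu..t})"
        using ph2[OF j(1) t x] by blast
      have "((\<lambda>\<tau>. s j * (u \<tau> j)^2 - s j * (u Twu j)^2) has_real_derivative s j * (4 * s j * c x j * (u x j)^2 * (1 - (u x j)^2)) - 0) (at x within {Twu..t})"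
        by (rule DERIV_diff[OF DERIV_cmult[OF dsq] DERIV_const])
      then show ?thesis unfolding h_def[abs_def] h'_def by simp
    qed
    have bh: "\<bar>h' x\<bar> \<le> (4 * s j) * \<bar>h x\<bar>" if x: "x \<in> {Twu..t}" for x
    proof -
      have xT: "x \<ge> Twu" using x by simp
      have P: "0 < (u x j)^2" "(u x j)^2 < 1" "(u Twu j)^2 \<le> (u x j)^2" using pt[OF j(1) xT] by auto
      have h0: "h x \<ge> 0" using P(3) sp[OF j(1)] by (simp add: h_def mult_left_mono)
      have lx: "lam x j = (u x j)^2 * s j" by (simp add: lam_def lat_var_def)
      have c01: "0 \<le> c x j" "c x j \<le> 1" using ch_props[OF sp R_pos j(1), where u = "u x"] by (auto simp: c_def lam_def)
      have cl: "c x j * lam x j \<le> h x"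
      proof (cases "active d (lam x) R j")
        case True
        then have "lam x j > wl x" by (simp add: active_def wl_def)
        then have "c x j = 1 - wl x / lam x j" using True by (simp add: c_def chc_def chD_def wl_def)
        then have "c x j * lam x j = lam x j - wl x" using lampos[OF xT j(1)] by (simp add: field_simps)
        also have "\<dots> \<le> lam x j - lam Twu j" using wlmono[OF xT] inactT[OF j] by simp
        finally show ?thesis using hl by simp
      next
        case False
        then have "c x j = 0" by (simp add: c_def chc_def)
        then show ?thesis using h0 by simp
      qed
      have cl0: "c x j * lam x j \<ge> 0" using c01 lampos[OF xT j(1)] by simp
      have eq: "h' x = 4 * s j * (c x j * lam x j) * (1 - (u x j)^2)" by (simp add: h'_def lx algebra_simps)
      have "h' x \<ge> 0" using eq cl0 P sp[OF j(1)] by simp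
      moreover have "h' x \<le> 4 * s j * h x"
      proof -
        have "(c x j * lam x j) * (1 - (u x j)^2) \<le> h x * 1"
          using cl cl0 P h0 by (intro mult_mono) auto
        then show ?thesis using eq sp[OF j(1)] by (simp add: mult.assoc mult_left_mono)
      qed
      ultimately show ?thesis using h0 by simp
    qed
    have "h t = 0"
      using gronwall0[where h = h, OF dh bh, of Twu t] t by (simp add: h_def)
    then show ?thesis using hl by simp
  qed
  have notact: "\<not> active d (lam t) R j" if j: "j \<in> {1..d}" "m < j" and t: "t \<ge> Twu" for j t
    using frozen[OF j t] inactT[OF j] wlmono[OF t] by (simp add: active_def wl_def)
  have part1: "card {j \<in> {1..d}. active d (lat_var s (u t)) R j} \<le> m" if t: "t \<ge> Twu" for t
  proof -
    have "{j \<in> {1..d}. active d (lat_var s (u t)) R j} \<subseteq> {1..m}"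
      using notact[OF _ _ t] by (force simp: lam_def)
    then show ?thesis using card_mono[of "{1..m}"] by fastforce
  qed
  have part2: "Lrec d s R (u t) (v t) \<ge> real m * delta s m R + (\<Sum>j\<in>{m + 1..d}. s j)"
    if t: "t \<ge> Twu" for t
  proof -
    let ?L = "lam t" and ?W = "wl t"
    define x where "x j = (if active d ?L R j then ?W / ?L j else 1)" for j
    have Wp: "?W > 0" and PhiR: "Phi d ?L ?W = R" using wlp[OF t] by auto
    have x01: "0 < x j \<and> x j \<le> 1" if j: "j \<in> {1..d}" for j
    proof (cases "active d ?L R j")
      case True
      then have "?L j > ?W" by (simp add: active_def wl_def)
      then show ?thesis using True Wp by (simp add: x_def)
    next
      case False then show ?thesis by (simp add: x_def)
    qed
    have x1: "x j = 1" if j: "j \<in> {1..d}" "m < j" for j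
      using notact[OF j t] by (simp add: x_def)
    have tb: "s j * x j \<le> s j * (1 - chc d (lat_var s (u t)) R j * u t j * v t j)^2
        + (v t j)^2 * chtau2 d (lat_var s (u t)) R j" if j: "j \<in> {1..d}" for j
    proof -
      have e: "v t j = u t j" using pt[OF j t] by simp
      have Lj: "?L j = (u t j)^2 * s j" by (simp add: lam_def lat_var_def)
      show ?thesis
      proof (cases "active d ?L R j")
        case True
        then have gt: "?L j > ?W" by (simp add: active_def wl_def)
        then have cc: "chc d (lat_var s (u t)) R j = 1 - x j"
          using True by (simp add: chc_def chD_def x_def lam_def wl_def)
        have tt: "chtau2 d (lat_var s (u t)) R j = (1 - x j) * ?W"
          using cc by (simp add: chtau2_def lam_def wl_def)
        have Wx: "?W = x j * (u t j)^2 * s j"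
        proof -
          have unz: "u t j \<noteq> 0" using pt[OF j t] by auto
          show ?thesis using True gt Wp Lj unz sp[OF j] by (simp add: x_def)
        qed
        have "s j * x j \<le> s j * (1 - (1 - x j) * (u t j)^2)^2 + (u t j)^2 * ((1 - x j) * (x j * (u t j)^2 * s j))"
          by (rule term_bound) (use sp[OF j] x01[OF j] in auto)
        then show ?thesis using cc tt Wx e by (simp add: power2_eq_square mult.assoc)
      next
        case False
        then have cc: "chc d (lat_var s (u t)) R j = 0" by (simp add: chc_def lam_def)
        then show ?thesis using False by (simp add: chtau2_def x_def)
      qed
    qed
    have S1: "Lrec d s R (u t) (v t) \<ge> (\<Sum>j=1..d. s j * x j)"
      unfolding Lrec_def by (rule sum_mono) (use tb in auto)
    have un: "{1..d} = {1..m} \<union> {m+1..d}" using m_rng by auto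
    have S2: "(\<Sum>j=1..d. s j * x j) = (\<Sum>j=1..m. s j * x j) + (\<Sum>j\<in>{m+1..d}. s j)"
    proof -
      have "(\<Sum>j=1..d. s j * x j) = (\<Sum>j=1..m. s j * x j) + (\<Sum>j\<in>{m+1..d}. s j * x j)"
        by (subst un, rule sum.union_disjoint) auto
      moreover have "(\<Sum>j\<in>{m+1..d}. s j * x j) = (\<Sum>j\<in>{m+1..d}. s j)"
        by (rule sum.cong) (use x1 in auto)
      ultimately show ?thesis by simp
    qed
    have lg: "log2p (?L j / ?W) = - log 2 (x j)" if j: "j \<in> {1..d}" for j
    proof (cases "active d ?L R j")
      case True
      then have gt: "?L j > ?W" by (simp add: active_def wl_def)
      then have "log2p (?L j / ?W) = log 2 (?L j / ?W)" using Wp by (intro log2p_gt1) simp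
      also have "\<dots> = - log 2 (?W / ?L j)" using gt Wp by (simp add: log_divide)
      finally show ?thesis using True by (simp add: x_def)
    next
      case False
      then have "?L j \<le> ?W" by (simp add: active_def wl_def)
      then have "log2p (?L j / ?W) = 0" using Wp lampos[OF t j] by (intro log2p_le1) auto
      then show ?thesis using False by (simp add: x_def)
    qed
    have "R = (\<Sum>j=1..d. log2p (?L j / ?W) / 2)" using PhiR by (simp add: Phi_def)
    also have "\<dots> = (\<Sum>j=1..d. - log 2 (x j) / 2)" by (rule sum.cong) (use lg in auto)
    also have "\<dots> = (\<Sum>j=1..m. - log 2 (x j) / 2) + (\<Sum>j\<in>{m+1..d}. - log 2 (x j) / 2)"
      by (subst un, rule sum.union_disjoint) auto
    also have "(\<Sum>j\<in>{m+1..d}. - log 2 (x j) / 2) = 0"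
      by (rule sum.neutral) (use x1 in auto)
    finally have "(\<Sum>j=1..m. ln (x j)) = - 2 * R * ln 2"
      by (simp add: log_def sum_divide_distrib[symmetric] sum_negf field_simps)
    moreover have "ln (\<Prod>j=1..m. x j) = (\<Sum>j=1..m. ln (x j))"
      by (rule ln_prod) (use x01 m_rng in \<open>auto simp: less_imp_neq[symmetric]\<close>)
    ultimately have "ln (\<Prod>j=1..m. x j) = - 2 * R * ln 2" by simp
    moreover have "(\<Prod>j=1..m. x j) > 0" by (rule prod_pos) (use x01 m_rng in auto)
    ultimately have prodx: "(\<Prod>j=1..m. x j) = 2 powr (- 2 * R)"
      by (metis exp_ln powr_def mult.commute zero_neq_numeral)
    have am: "(\<Sum>j\<in>{1..m}. s j * x j / card {1..m}) \<ge> (\<Prod>j\<in>{1..m}. s j * x j) powr (1 / card {1..m})"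
      by (rule arith_geom_mean) (use m_rng sp x01 in \<open>auto intro!: mult_nonneg_nonneg less_imp_le\<close>)
    have cm: "card {1..m} = m" by simp
    have mpos: "real m > 0" using m_rng by simp
    have "(\<Sum>j=1..m. s j * x j) \<ge> real m * (\<Prod>j\<in>{1..m}. s j * x j) powr (1 / real m)"
    proof -
      have "(\<Sum>j\<in>{1..m}. s j * x j / card {1..m}) = (\<Sum>j=1..m. s j * x j) / real m"
        by (simp add: sum_divide_distrib[symmetric] cm)
      have am': "(\<Prod>j\<in>{1..m}. s j * x j) powr (1 / real m) \<le> (\<Sum>j=1..m. s j * x j) / real m"
        using am cm \<open>(\<Sum>j\<in>{1..m}. s j * x j / card {1..m}) = _\<close> by simp
      have "real m * (\<Prod>j\<in>{1..m}. s j * x j) powr (1 / real m) \<le> real m * ((\<Sum>j=1..m. s j * x j) / real m)"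
        by (rule mult_left_mono[OF am']) simp
      then show ?thesis using mpos by simp
    qed
    moreover have "(\<Prod>j\<in>{1..m}. s j * x j) powr (1 / real m) = delta s m R"
    proof -
      have "(\<Prod>j\<in>{1..m}. s j * x j) = (\<Prod>j=1..m. s j) * 2 powr (- 2 * R)"
        by (simp only: prod.distrib prodx)
      moreover have "(\<Prod>j=1..m. s j) \<ge> 0" by (rule prod_nonneg) (use sp m_rng in \<open>auto intro: less_imp_le\<close>)
      ultimately show ?thesis
        by (simp add: delta_def powr_mult powr_powr)
    qed
    ultimately show ?thesis using S1 S2 by simp
  qed
  show ?thesis
  proof
    show "\<forall>\<^sub>F t in at_top. card {j \<in> {1..d}. active d (lat_var s (u t)) R j} \<le> m_wu d s \<epsilon> Twu R"
      by (rule eventually_mono[OF eventually_ge_at_top[of Twu]]) (use part1 in \<open>simp add: m_def\<close>)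
    show "real (m_wu d s \<epsilon> Twu R) * delta s (m_wu d s \<epsilon> Twu R) R + (\<Sum>j\<in>{m_wu d s \<epsilon> Twu R + 1..d}. s j) \<le> Linf"
      unfolding m_def[symmetric]
    proof (rule tendsto_lowerbound[OF conv])
      show "\<forall>\<^sub>F t in at_top. real m * delta s m R + (\<Sum>j\<in>{m + 1..d}. s j) \<le> Lrec d s R (u t) (v t)"
        by (rule eventually_mono[OF eventually_ge_at_top[of Twu]]) (rule part2)
    qed simp
  qed
qed


end
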